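(* Let $\alpha=1/2$. (i) For every $(x,y)\in[0,1]^2$ with $x+y\ge 1$ we have $G_{1/2}(x,y)=(y,2-x-y)$, $G_{1/2}^2(x,y)=(2-x-y,x)$ and $G_{1/2}^3(x,y)=(x,y)$; in particular every such point is periodic with period $3$ except the fixed point $(2/3,2/3)$. The only fixed points of $G_{1/2}$ in $[0,1]^2$ are $(0,0)$ and $(2/3,2/3)$. (ii) For every $(x,y)\in[0,1]^2\setminus\{(0,0)\}$ there is $n\ge 0$ such that $G_{1/2}^n(x,y)=(u,v)$ satisfies $u+v\ge 1$; hence every point other than $(0,0)$ is periodic of period $3$, or fixed, or eventually periodic of period $3$ or eventually fixed.
   Context: Let $\tau:[0,1]\to[0,1]$ be the symmetric tent map, $\tau(x)=2x$ for $0\le x<1/2$ and $\tau(x)=2-2x$ for $1/2\le x\le 1$. For $0<\alpha<1$ define $G_\alpha:[0,1]^2\to[0,1]^2$ by $G_\alpha(x,y)=(y,\tau(\alpha y+(1-\alpha)x))$. *)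

theory Defs
  imports Complex_Main
begin

definition tent :: "real \<Rightarrow> real" where
  "tent x = (if x < 1/2 then 2 * x else 2 - 2 * x)"

definition G :: "real \<Rightarrow> real \<times> real \<Rightarrow> real \<times> real" where
  "G \<alpha> p = (snd p, tent (\<alpha> * snd p + (1 - \<alpha>) * fst p))"

definition unit_square :: "(real \<times> real) set" where
  "unit_square = {0..1} \<times> {0..1}"

end

theory Submission
  imports Defs
begin

lemma G_hi: "0\<le>x \<Longrightarrow> x\<le>1 \<Longrightarrow> 0\<le>y \<Longrightarrow> y\<le>1 \<Longrightarrow> x+y\<ge>1 \<Longrightarrow> G (1/2) (x,y) = (y, 2-x-y)"
  by (simp add: G_def tent_def)

lemma G_lo: "x+y<1 \<Longrightarrow> G (1/2) (x,y) = (y, x+y)"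
  by (simp add: G_def tent_def)

lemma part1:
  assumes "0\<le>x" "x\<le>1" "0\<le>y" "y\<le>1" "x+y\<ge>1"
  shows "G (1/2) (x, y) = (y, 2 - x - y) \<and>
            (G (1/2) ^^ 2) (x, y) = (2 - x - y, x) \<and>
            (G (1/2) ^^ 3) (x, y) = (x, y) \<and>
            ((x, y) \<noteq> (2/3, 2/3) \<longrightarrow>
               G (1/2) (x, y) \<noteq> (x, y) \<and> (G (1/2) ^^ 2) (x, y) \<noteq> (x, y))"
proof -
  have g1: "G (1/2) (x, y) = (y, 2 - x - y)" using assms by (rule G_hi)
  have g2: "G (1/2) (y, 2-x-y) = (2-x-y, x)" using assms by (subst G_hi) auto
  have g3: "G (1/2) (2-x-y, x) = (x, y)" using assms by (subst G_hi) auto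
  have e2: "(G (1/2) ^^ 2) (x, y) = (2 - x - y, x)" using g1 g2 by (simp add: numeral_2_eq_2)
  have e3: "(G (1/2) ^^ 3) (x, y) = (x, y)" using g1 g2 g3 by (simp add: eval_nat_numeral)
  show ?thesis using g1 e2 e3 by auto
qed

lemma reach:
  fixes c :: real
  assumes "c > 0"
  shows "\<forall>a b. 0\<le>a \<and> a\<le>1 \<and> 0\<le>b \<and> b\<le>1 \<and> b\<ge>c \<and> a+b \<ge> 1 - real k * c \<longrightarrow>
     (\<exists>n. (G (1/2) ^^ n) (a,b) \<in> unit_square \<and> fst ((G (1/2) ^^ n) (a,b)) + snd ((G (1/2) ^^ n) (a,b)) \<ge> 1)"
proof (induction k)
  case 0
  show ?case
    apply (intro allI impI)
    apply (rule exI[of _ 0])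
    by (auto simp: unit_square_def)
next
  case (Suc k)
  show ?case
  proof (intro allI impI)
    fix a b assume h: "0\<le>a \<and> a\<le>1 \<and> 0\<le>b \<and> b\<le>1 \<and> b\<ge>c \<and> a+b \<ge> 1 - real (Suc k) * c"
    show "\<exists>n. (G (1/2) ^^ n) (a,b) \<in> unit_square \<and> fst ((G (1/2) ^^ n) (a,b)) + snd ((G (1/2) ^^ n) (a,b)) \<ge> 1"
    proof (cases "a+b\<ge>1")
      case True
      then show ?thesis using h by (intro exI[of _ 0]) (auto simp: unit_square_def)
    next
      case False
      hence g: "G (1/2) (a,b) = (b, a+b)" by (intro G_lo) auto
      have "0\<le>b \<and> b\<le>1 \<and> 0\<le>a+b \<and> a+b\<le>1 \<and> a+b\<ge>c \<and> b+(a+b) \<ge> 1 - real k * c"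
        using h False by (auto simp: algebra_simps)
      then obtain n where n: "(G (1/2) ^^ n) (b,a+b) \<in> unit_square \<and> fst ((G (1/2) ^^ n) (b,a+b)) + snd ((G (1/2) ^^ n) (b,a+b)) \<ge> 1"
        using Suc.IH by blast
      show ?thesis
        apply (rule exI[of _ "Suc n"])
        using n g by (simp only: funpow_Suc_right o_apply)
    qed
  qed
qed

lemma part2:
  assumes "p \<in> unit_square" "p \<noteq> (0,0)"
  shows "\<exists>n. (G (1/2) ^^ n) p \<in> unit_square \<and> fst ((G (1/2) ^^ n) p) + snd ((G (1/2) ^^ n) p) \<ge> 1"
proof -
  obtain x y where p: "p = (x,y)" by (cases p)
  have b: "0\<le>x" "x\<le>1" "0\<le>y" "y\<le>1" using assms p by (auto simp: unit_square_def)
  show ?thesis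
  proof (cases "x+y\<ge>1")
    case True
    then show ?thesis using assms p by (intro exI[of _ 0]) auto
  next
    case False
    hence g: "G (1/2) (x,y) = (y, x+y)" by (intro G_lo) auto
    have c: "x+y > 0" using b assms p by (cases "x = 0") auto
    obtain k where k: "1 / (x+y) < real k" using reals_Archimedean2 by blast
    have "1 < real k * (x+y)" using k c by (simp add: field_simps)
    hence "0\<le>y \<and> y\<le>1 \<and> 0\<le>x+y \<and> x+y\<le>1 \<and> x+y\<ge>x+y \<and> y+(x+y) \<ge> 1 - real k * (x+y)"
      using b False by auto
    then obtain n where n: "(G (1/2) ^^ n) (y,x+y) \<in> unit_square \<and> fst ((G (1/2) ^^ n) (y,x+y)) + snd ((G (1/2) ^^ n) (y,x+y)) \<ge> 1"
      using reach[OF c, of k] by blast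
    show ?thesis
      apply (rule exI[of _ "Suc n"])
      using n g p by (simp only: funpow_Suc_right o_apply)
  qed
qed

theorem mainTheorem5:
  shows "(\<forall>x y. (x, y) \<in> unit_square \<and> x + y \<ge> 1 \<longrightarrow>
            G (1/2) (x, y) = (y, 2 - x - y) \<and>
            (G (1/2) ^^ 2) (x, y) = (2 - x - y, x) \<and>
            (G (1/2) ^^ 3) (x, y) = (x, y) \<and>
            ((x, y) \<noteq> (2/3, 2/3) \<longrightarrow>
               G (1/2) (x, y) \<noteq> (x, y) \<and> (G (1/2) ^^ 2) (x, y) \<noteq> (x, y)))
       \<and> {p \<in> unit_square. G (1/2) p = p} = {(0, 0), (2/3, 2/3)}
       \<and> (\<forall>p \<in> unit_square - {(0, 0)}.
            (\<exists>n. fst ((G (1/2) ^^ n) p) + snd ((G (1/2) ^^ n) p) \<ge> 1) \<and>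
            (\<exists>n. let q = (G (1/2) ^^ n) p in
                  G (1/2) q = q \<or>
                  ((G (1/2) ^^ 3) q = q \<and> G (1/2) q \<noteq> q \<and> (G (1/2) ^^ 2) q \<noteq> q)))"
proof (intro conjI)
  show "\<forall>x y. (x, y) \<in> unit_square \<and> x + y \<ge> 1 \<longrightarrow>
            G (1/2) (x, y) = (y, 2 - x - y) \<and>
            (G (1/2) ^^ 2) (x, y) = (2 - x - y, x) \<and>
            (G (1/2) ^^ 3) (x, y) = (x, y) \<and>
            ((x, y) \<noteq> (2/3, 2/3) \<longrightarrow>
               G (1/2) (x, y) \<noteq> (x, y) \<and> (G (1/2) ^^ 2) (x, y) \<noteq> (x, y))"
    using part1 by (auto simp: unit_square_def)
  show "{p \<in> unit_square. G (1/2) p = p} = {(0, 0), (2/3, 2/3)}"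
  proof (rule set_eqI)
    fix p :: "real \<times> real"
    obtain x y where p: "p = (x,y)" by (cases p)
    show "p \<in> {p \<in> unit_square. G (1/2) p = p} \<longleftrightarrow> p \<in> {(0, 0), (2/3, 2/3)}"
      unfolding p by (auto simp: unit_square_def G_def tent_def split: if_splits)
  qed
  show "\<forall>p \<in> unit_square - {(0, 0)}.
            (\<exists>n. fst ((G (1/2) ^^ n) p) + snd ((G (1/2) ^^ n) p) \<ge> 1) \<and>
            (\<exists>n. let q = (G (1/2) ^^ n) p in
                  G (1/2) q = q \<or>
                  ((G (1/2) ^^ 3) q = q \<and> G (1/2) q \<noteq> q \<and> (G (1/2) ^^ 2) q \<noteq> q))"
  proof
    fix p assume "p \<in> unit_square - {(0, 0)}"
    then obtain n where n: "(G (1/2) ^^ n) p \<in> unit_square \<and> fst ((G (1/2) ^^ n) p) + snd ((G (1/2) ^^ n) p) \<ge> 1"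
      using part2 by blast
    obtain x y where q: "(G (1/2) ^^ n) p = (x,y)" by (cases "(G (1/2) ^^ n) p")
    have b: "0\<le>x" "x\<le>1" "0\<le>y" "y\<le>1" "x+y\<ge>1" using n q by (auto simp: unit_square_def)
    have "G (1/2) (x,y) = (x,y) \<or>
                  ((G (1/2) ^^ 3) (x,y) = (x,y) \<and> G (1/2) (x,y) \<noteq> (x,y) \<and> (G (1/2) ^^ 2) (x,y) \<noteq> (x,y))"
    proof (cases "(x,y) = (2/3, 2/3)")
      case True then show ?thesis by (auto simp: G_def tent_def)
    next
      case False then show ?thesis using part1[OF b] by blast
    qed
    then show "(\<exists>n. fst ((G (1/2) ^^ n) p) + snd ((G (1/2) ^^ n) p) \<ge> 1) \<and>
            (\<exists>n. let q = (G (1/2) ^^ n) p in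
                  G (1/2) q = q \<or>
                  ((G (1/2) ^^ 3) q = q \<and> G (1/2) q \<noteq> q \<and> (G (1/2) ^^ 2) q \<noteq> q))"
      using n q by (metis (no_types, lifting))
  qed
qed

end
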